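(* Let $m\ge 1$, $p\ge 2m+3$, and let $\Sigma=(\sigma_{ij})\in\mathbb{R}^{p\times p}$ be positive definite such that every $(p-1)\times(p-1)$ principal submatrix of $\Sigma$ lies in $F_{p-1,m}$. Write $\Sigma_{\setminus p,\setminus p}=\Delta+\Gamma\Gamma^t$ and $\Sigma_{\setminus 1,\setminus 1}=D+GG^t$ with $\Delta, D$ positive definite diagonal $(p-1)\times(p-1)$ matrices and $\Gamma,G\in\mathbb{R}^{(p-1)\times m}$, where the rows of $\Delta,\Gamma$ are indexed by $1,\dots,p-1$ and the rows of $D,G$ are indexed by $2,\dots,p$ (matching the rows of $\Sigma$). Suppose: (i) $\Gamma_{\setminus 1}=G_{\setminus p}$, i.e. the rows of $\Gamma$ and $G$ indexed by $2,\dots,p-1$ coincide; and (ii) there are disjoint subsets $B,C\subseteq\{2,\dots,p-1\}$ with $|B|=|C|=m$ such that $\det(\Sigma_{B,C})\neq 0$. Then $\Sigma\in F_{p,m}$.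
   Context: For integers $p\ge 1$, $m\ge 1$, $F_{p,m}=\{\Delta+\Gamma\Gamma^t : \Delta \text{ a positive definite diagonal } p\times p \text{ matrix},\ \Gamma\in\mathbb{R}^{p\times m}\}$. For a matrix $\Lambda$ with row index set $I$ and column index set $J$ and $A\subseteq I$, $B\subseteq J$: $\Lambda_{A,B}$ is the submatrix with rows in $A$ and columns in $B$; $\Lambda_A=\Lambda_{A,J}$; $\Lambda_{\setminus A,\setminus B}=\Lambda_{I\setminus A,J\setminus B}$; $\setminus i$ means $\setminus\{i\}$, so $\Lambda_{\setminus i}$ is $\Lambda$ with row $i$ removed and $\Sigma_{\setminus i,\setminus i}$ is $\Sigma$ with row and column $i$ removed. *)

theory Defs
  imports Main "Jordan_Normal_Form.Determinant"
begin

(* Matrices are functions nat => nat => real, considered on an explicit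
   finite index set of rows/columns (a subset of {1..p}).  Factor loadings
   have columns indexed by {..<m}. *)

definition pos_def_on :: "nat set \<Rightarrow> (nat \<Rightarrow> nat \<Rightarrow> real) \<Rightarrow> bool" where
  "pos_def_on I S \<longleftrightarrow>
     (\<forall>i\<in>I. \<forall>j\<in>I. S i j = S j i) \<and>
     (\<forall>x :: nat \<Rightarrow> real. (\<exists>i\<in>I. x i \<noteq> 0) \<longrightarrow>
         (\<Sum>i\<in>I. \<Sum>j\<in>I. x i * S i j * x j) > 0)"

definition factor_decomp_on ::
  "nat set \<Rightarrow> nat \<Rightarrow> (nat \<Rightarrow> nat \<Rightarrow> real) \<Rightarrow> (nat \<Rightarrow> real) \<Rightarrow> (nat \<Rightarrow> nat \<Rightarrow> real) \<Rightarrow> bool" where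
  "factor_decomp_on I m S d L \<longleftrightarrow>
     (\<forall>i\<in>I. d i > 0) \<and>
     (\<forall>i\<in>I. \<forall>j\<in>I. S i j = (if i = j then d i else 0) + (\<Sum>k<m. L i k * L j k))"

definition in_F_on :: "nat set \<Rightarrow> nat \<Rightarrow> (nat \<Rightarrow> nat \<Rightarrow> real) \<Rightarrow> bool" where
  "in_F_on I m S \<longleftrightarrow> (\<exists>d L. factor_decomp_on I m S d L)"

definition submat_of :: "(nat \<Rightarrow> nat \<Rightarrow> real) \<Rightarrow> nat set \<Rightarrow> nat set \<Rightarrow> real mat" where
  "submat_of S B C = mat (card B) (card C)
     (\<lambda>(a, b). S (sorted_list_of_set B ! a) (sorted_list_of_set C ! b))"

end

theory Submission
  imports Defs
begin

lemma inv_exists: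
  assumes A: "(A::real mat) \<in> carrier_mat n n" and "det A \<noteq> 0"
  obtains B where "B \<in> carrier_mat n n" "B * A = 1\<^sub>m n" "A * B = 1\<^sub>m n"
proof -
  from det_non_zero_imp_unit[OF A assms(2), of "()"]
  show ?thesis using that unfolding Units_def ring_mat_def by auto
qed

lemma core_mat:
  fixes LB LC HB HC :: "real mat" and u v u' v' :: "real vec"
  assumes c: "LB \<in> carrier_mat m m" "LC \<in> carrier_mat m m" "HB \<in> carrier_mat m m" "HC \<in> carrier_mat m m"
   and cv: "u \<in> carrier_vec m" "v \<in> carrier_vec m" "u' \<in> carrier_vec m" "v' \<in> carrier_vec m"
   and e1: "LB * transpose_mat LC = HB * transpose_mat HC"
   and e2: "LC *\<^sub>v u = HC *\<^sub>v u'"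
   and e3: "LB *\<^sub>v v = HB *\<^sub>v v'"
   and d: "det (LB * transpose_mat LC) \<noteq> 0"
  shows "u \<bullet> v = u' \<bullet> v'"
proof -
  have dL: "det (LB * transpose_mat LC) = det LB * det LC"
    using c by (simp add: det_mult det_transpose)
  have dH: "det (HB * transpose_mat HC) = det HB * det HC"
    using c by (simp add: det_mult det_transpose)
  have "det LC \<noteq> 0" using d dL by auto
  have "det HB \<noteq> 0" using d dH e1 by auto
  obtain HBi where HBi: "HBi \<in> carrier_mat m m" "HBi * HB = 1\<^sub>m m" "HB * HBi = 1\<^sub>m m"
    using inv_exists[OF c(3) \<open>det HB \<noteq> 0\<close>] by blast
  obtain LCi where LCi: "LCi \<in> carrier_mat m m" "LCi * LC = 1\<^sub>m m"
    using inv_exists[OF c(2) \<open>det LC \<noteq> 0\<close>] by blast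
  define X where "X = HBi * LB"
  have X: "X \<in> carrier_mat m m" using HBi c X_def by auto
  have "X * transpose_mat LC = HBi * (LB * transpose_mat LC)"
    unfolding X_def using HBi c by (simp add: assoc_mult_mat[of _ m m _ m _ m])
  also have "\<dots> = (HBi * HB) * transpose_mat HC" unfolding e1
    using HBi c assoc_mult_mat[of HBi m m HB m "transpose_mat HC" m] by simp
  also have "\<dots> = transpose_mat HC" using HBi c by simp
  finally have X1: "X * transpose_mat LC = transpose_mat HC" .
  have "LC * transpose_mat X = HC" using X1 X c
  proof -
    have "transpose_mat (X * transpose_mat LC) = LC * transpose_mat X"
      using transpose_mult[OF X, of "transpose_mat LC" m] c by simp
    thus ?thesis using X1 by simp
  qed
  have "LC *\<^sub>v (transpose_mat X *\<^sub>v u') = (LC * transpose_mat X) *\<^sub>v u'"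
    using X c cv by simp
  also have "\<dots> = HC *\<^sub>v u'" using \<open>LC * transpose_mat X = HC\<close> by simp
  finally have "LC *\<^sub>v (transpose_mat X *\<^sub>v u') = LC *\<^sub>v u" using e2 by simp
  hence "LCi *\<^sub>v (LC *\<^sub>v (transpose_mat X *\<^sub>v u')) = LCi *\<^sub>v (LC *\<^sub>v u)" by simp
  hence U: "transpose_mat X *\<^sub>v u' = u" using LCi c cv X
    using assoc_mult_mat_vec[of LCi m m LC m "transpose_mat X *\<^sub>v u'"] assoc_mult_mat_vec[of LCi m m LC m u] by simp
  have "X *\<^sub>v v = HBi *\<^sub>v (LB *\<^sub>v v)" unfolding X_def using HBi c cv by simp
  also have "\<dots> = HBi *\<^sub>v (HB *\<^sub>v v')" using e3 by simp
  also have "\<dots> = v'" using HBi c cv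
    using assoc_mult_mat_vec[of HBi m m HB m v'] by simp
  finally have V: "X *\<^sub>v v = v'" .
  have "u \<bullet> v = (transpose_mat X *\<^sub>v u') \<bullet> v" using U by simp
  also have "\<dots> = u' \<bullet> (X *\<^sub>v v)" by (rule transpose_vec_mult_scalar[OF X cv(2) cv(3)])
  finally show ?thesis using V by simp
qed

lemma core_fun:
  fixes lb lc hb hc :: "nat \<Rightarrow> nat \<Rightarrow> real" and u v u' v' :: "nat \<Rightarrow> real"
  assumes d: "det (mat m m (\<lambda>(a,b). \<Sum>k<m. lb a k * lc b k)) \<noteq> 0"
  and h1: "\<forall>a<m. \<forall>b<m. (\<Sum>k<m. lb a k * lc b k) = (\<Sum>k<m. hb a k * hc b k)"
  and h2: "\<forall>b<m. (\<Sum>k<m. lc b k * u k) = (\<Sum>k<m. hc b k * u' k)"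
  and h3: "\<forall>a<m. (\<Sum>k<m. lb a k * v k) = (\<Sum>k<m. hb a k * v' k)"
  shows "(\<Sum>k<m. u k * v k) = (\<Sum>k<m. u' k * v' k)"
proof -
  define LB where "LB = mat m m (\<lambda>(a,k). lb a k)"
  define LC where "LC = mat m m (\<lambda>(a,k). lc a k)"
  define HB where "HB = mat m m (\<lambda>(a,k). hb a k)"
  define HC where "HC = mat m m (\<lambda>(a,k). hc a k)"
  have c: "LB \<in> carrier_mat m m" "LC \<in> carrier_mat m m" "HB \<in> carrier_mat m m" "HC \<in> carrier_mat m m"
    unfolding LB_def LC_def HB_def HC_def by auto
  have cv: "vec m u \<in> carrier_vec m" "vec m v \<in> carrier_vec m" "vec m u' \<in> carrier_vec m" "vec m v' \<in> carrier_vec m"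
    by auto
  have E1: "LB * transpose_mat LC = mat m m (\<lambda>(a,b). \<Sum>k<m. lb a k * lc b k)"
    by (rule eq_matI, auto simp: LB_def LC_def scalar_prod_def lessThan_atLeast0)
  have E2: "HB * transpose_mat HC = mat m m (\<lambda>(a,b). \<Sum>k<m. hb a k * hc b k)"
    by (rule eq_matI, auto simp: HB_def HC_def scalar_prod_def lessThan_atLeast0)
  have e1: "LB * transpose_mat LC = HB * transpose_mat HC"
    unfolding E1 E2 by (rule eq_matI, insert h1, auto)
  have e2: "LC *\<^sub>v vec m u = HC *\<^sub>v vec m u'"
    by (rule eq_vecI, insert h2, auto simp: LC_def HC_def scalar_prod_def lessThan_atLeast0)
  have e3: "LB *\<^sub>v vec m v = HB *\<^sub>v vec m v'"
    by (rule eq_vecI, insert h3, auto simp: LB_def HB_def scalar_prod_def lessThan_atLeast0)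
  have "vec m u \<bullet> vec m v = vec m u' \<bullet> vec m v'"
    by (rule core_mat[OF c cv e1 e2 e3], unfold E1, rule d)
  thus ?thesis by (simp add: scalar_prod_def lessThan_atLeast0)
qed


theorem lemma2:
  fixes m p :: nat
    and Sigma :: "nat \<Rightarrow> nat \<Rightarrow> real"
    and delta d :: "nat \<Rightarrow> real"
    and Gamma G :: "nat \<Rightarrow> nat \<Rightarrow> real"
  assumes "m \<ge> 1"
    and "p \<ge> 2 * m + 3"
    and "pos_def_on {1..p} Sigma"
    and "\<forall>i\<in>{1..p}. in_F_on ({1..p} - {i}) m Sigma"
    and "factor_decomp_on {1..p-1} m Sigma delta Gamma"
    and "factor_decomp_on {2..p} m Sigma d G"
    and "\<forall>i\<in>{2..p-1}. \<forall>k<m. Gamma i k = G i k"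
    and "\<exists>B C. B \<subseteq> {2..p-1} \<and> C \<subseteq> {2..p-1} \<and> B \<inter> C = {} \<and>
               card B = m \<and> card C = m \<and> det (submat_of Sigma B C) \<noteq> 0"
  shows "in_F_on {1..p} m Sigma"
proof -
  note A = assms
  obtain B C where BC: "B \<subseteq> {2..p-1}" "C \<subseteq> {2..p-1}" "B \<inter> C = {}" "card B = m" "card C = m"
    "det (submat_of Sigma B C) \<noteq> 0" using A(8) by blast
  have fB: "finite B" "finite C" using BC(1,2) finite_subset by blast+
  have "card (B \<union> C) \<le> 2*m" using BC card_Un_le[of B C] by simp
  moreover have "card {2..p-1} = p - 2" by simp
  ultimately have "card (B \<union> C) < card {2..p-1}" using A(2) by simp
  hence "\<not> {2..p-1} \<subseteq> B \<union> C" using card_mono[of "B \<union> C" "{2..p-1}"] fB by auto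
  then obtain r where r0: "r \<in> {2..p-1}" "r \<notin> B \<union> C" by blast
  hence r: "r \<in> {2..p-1}" "r \<notin> B" "r \<notin> C" by auto
  have "r \<in> {1..p}" using r by auto
  then obtain e H where H: "factor_decomp_on ({1..p} - {r}) m Sigma e H"
    using A(4) unfolding in_F_on_def by blast
  have Hs: "\<And>i j. i \<in> {1..p} - {r} \<Longrightarrow> j \<in> {1..p} - {r} \<Longrightarrow> i \<noteq> j \<Longrightarrow>
     Sigma i j = (\<Sum>k<m. H i k * H j k)"
    using H unfolding factor_decomp_on_def by auto
  have Gs: "\<And>i j. i \<in> {1..p-1} \<Longrightarrow> j \<in> {1..p-1} \<Longrightarrow>
     Sigma i j = (if i = j then delta i else 0) + (\<Sum>k<m. Gamma i k * Gamma j k)"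
    using A(5) unfolding factor_decomp_on_def by auto
  have Gp: "\<And>i j. i \<in> {2..p} \<Longrightarrow> j \<in> {2..p} \<Longrightarrow>
     Sigma i j = (if i = j then d i else 0) + (\<Sum>k<m. G i k * G j k)"
    using A(6) unfolding factor_decomp_on_def by auto
  have sym: "\<And>i j. i \<in> {1..p} \<Longrightarrow> j \<in> {1..p} \<Longrightarrow> Sigma i j = Sigma j i"
    using A(3) unfolding pos_def_on_def by auto
  define sB where "sB = sorted_list_of_set B"
  define sC where "sC = sorted_list_of_set C"
  have sBin: "\<And>a. a < m \<Longrightarrow> sB ! a \<in> B"
    unfolding sB_def using fB BC(4) by (metis length_sorted_list_of_set nth_mem set_sorted_list_of_set)
  have sCin: "\<And>a. a < m \<Longrightarrow> sC ! a \<in> C"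
    unfolding sC_def using fB BC(5) by (metis length_sorted_list_of_set nth_mem set_sorted_list_of_set)
  have key: "Sigma 1 p = (\<Sum>k<m. Gamma 1 k * G p k)"
  proof -
    have "(\<Sum>k<m. Gamma 1 k * G p k) = (\<Sum>k<m. H 1 k * H p k)"
    proof (rule core_fun[where lb="\<lambda>a k. Gamma (sB!a) k" and lc="\<lambda>a k. Gamma (sC!a) k"
          and hb="\<lambda>a k. H (sB!a) k" and hc="\<lambda>a k. H (sC!a) k"])
      have "mat m m (\<lambda>(a, b). \<Sum>k<m. Gamma (sB ! a) k * Gamma (sC ! b) k) = submat_of Sigma B C"
        unfolding submat_of_def BC(4,5) sB_def[symmetric] sC_def[symmetric]
      proof (rule eq_matI, auto)
        fix a b assume ab: "a < m" "b < m"
        have "sB ! a \<noteq> sC ! b" using sBin[OF ab(1)] sCin[OF ab(2)] BC(3) by auto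
        thus "(\<Sum>k<m. Gamma (sB ! a) k * Gamma (sC ! b) k) = Sigma (sB ! a) (sC ! b)"
        proof -
          have "sB ! a \<in> {1..p-1}" "sC ! b \<in> {1..p-1}" using sBin[OF ab(1)] sCin[OF ab(2)] BC(1,2) by auto
          thus ?thesis using Gs[of "sB ! a" "sC ! b"] \<open>sB ! a \<noteq> sC ! b\<close> by simp
        qed
      qed
      thus "det (mat m m (\<lambda>(a, b). \<Sum>k<m. Gamma (sB ! a) k * Gamma (sC ! b) k)) \<noteq> 0"
        using BC(6) by simp
      show "\<forall>a<m. \<forall>b<m. (\<Sum>k<m. Gamma (sB ! a) k * Gamma (sC ! b) k) = (\<Sum>k<m. H (sB ! a) k * H (sC ! b) k)"
      proof (intro allI impI)
        fix a b assume ab: "a < m" "b < m"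
        have ne: "sB ! a \<noteq> sC ! b" using sBin[OF ab(1)] sCin[OF ab(2)] BC(3) by auto
        have i1: "sB ! a \<in> {2..p-1}" "sC ! b \<in> {2..p-1}" using sBin[OF ab(1)] sCin[OF ab(2)] BC(1,2) by auto
        have i2: "sB ! a \<noteq> r" "sC ! b \<noteq> r" using sBin[OF ab(1)] sCin[OF ab(2)] r by auto
        show "(\<Sum>k<m. Gamma (sB ! a) k * Gamma (sC ! b) k) = (\<Sum>k<m. H (sB ! a) k * H (sC ! b) k)"
          using Gs[of "sB ! a" "sC ! b"] Hs[of "sB ! a" "sC ! b"] ne i1 i2 by auto
      qed
      show "\<forall>b<m. (\<Sum>k<m. Gamma (sC ! b) k * Gamma 1 k) = (\<Sum>k<m. H (sC ! b) k * H 1 k)"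
      proof (intro allI impI)
        fix b assume ab: "b < m"
        have i1: "sC ! b \<in> {2..p-1}" using sCin[OF ab] BC(2) by auto
        have i2: "sC ! b \<noteq> r" using sCin[OF ab] r by auto
        have "1 \<in> {1..p-1}" "1 \<in> {1..p} - {r}" using A(2) r by auto
        thus "(\<Sum>k<m. Gamma (sC ! b) k * Gamma 1 k) = (\<Sum>k<m. H (sC ! b) k * H 1 k)"
          using Gs[of "sC ! b" 1] Hs[of "sC ! b" 1] i1 i2 by auto
      qed
      show "\<forall>a<m. (\<Sum>k<m. Gamma (sB ! a) k * G p k) = (\<Sum>k<m. H (sB ! a) k * H p k)"
      proof (intro allI impI)
        fix a assume ab: "a < m"
        have i1: "sB ! a \<in> {2..p-1}" using sBin[OF ab] BC(1) by auto
        have i2: "sB ! a \<noteq> r" using sBin[OF ab] r by auto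
        have "p \<in> {2..p}" "p \<in> {1..p} - {r}" using A(2) r by auto
        moreover have "(\<Sum>k<m. Gamma (sB ! a) k * G p k) = (\<Sum>k<m. G (sB ! a) k * G p k)"
          using A(7) i1 by auto
        ultimately show "(\<Sum>k<m. Gamma (sB ! a) k * G p k) = (\<Sum>k<m. H (sB ! a) k * H p k)"
          using Gp[of "sB ! a" p] Hs[of "sB ! a" p] i1 i2 by auto
      qed
    qed
    also have "\<dots> = Sigma 1 p" using Hs[of 1 p] A(2) r by auto
    finally show ?thesis by simp
  qed
  define L where "L i k = (if i = p then G p k else Gamma i k)" for i k
  define dd where "dd i = (if i = p then d p else delta i)" for i
  have "factor_decomp_on {1..p} m Sigma dd L"
    unfolding factor_decomp_on_def
  proof (intro conjI ballI)
    fix i assume i: "i \<in> {1..p}"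
    show "dd i > 0" using A(5,6) i A(2) unfolding dd_def factor_decomp_on_def by auto
  next
    fix i j assume i: "i \<in> {1..p}" and j: "j \<in> {1..p}"
    show "Sigma i j = (if i = j then dd i else 0) + (\<Sum>k<m. L i k * L j k)"
    proof (cases "i = p")
      case ip: True
      show ?thesis
      proof (cases "j = 1")
        case True
        have "Sigma i j = Sigma 1 p" using sym[of i j] i j ip True by simp
        thus ?thesis using key ip True A(2) unfolding L_def dd_def by (simp add: mult.commute)
      next
        case False
        hence j2: "j \<in> {2..p}" using j by auto
        have "(\<Sum>k<m. L i k * L j k) = (\<Sum>k<m. G i k * G j k)"
          using ip j2 A(7) unfolding L_def by (intro sum.cong) auto
        thus ?thesis using Gp[of i j] ip j2 A(2) unfolding dd_def by auto
      qed
    next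
      case inp: False
      show ?thesis
      proof (cases "j = p")
        case jp: True
        show ?thesis
        proof (cases "i = 1")
          case True
          thus ?thesis using key jp A(2) unfolding L_def dd_def by simp
        next
          case False
          hence i2: "i \<in> {2..p}" using i by auto
          have "(\<Sum>k<m. L i k * L j k) = (\<Sum>k<m. G i k * G j k)"
            using inp jp i2 A(7) unfolding L_def by (intro sum.cong) auto
          thus ?thesis using Gp[of i j] inp jp i2 A(2) unfolding dd_def by auto
        qed
      next
        case jnp: False
        thus ?thesis using Gs[of i j] i j inp unfolding L_def dd_def by auto
      qed
    qed
  qed
  thus ?thesis unfolding in_F_on_def by blast
qed

end
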